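(* Let $\lambda$ be an infinite cardinal, $\theta$ an infinite regular cardinal with $\theta<\lambda$, and $\chi$ either $2$ or an infinite cardinal. Then: (1) $\lambda\le m(\theta,\lambda)\le\min\{\mathrm{cf}([\lambda]^\theta,\subseteq),\mathrm{cf}([\lambda]^\theta,\supseteq)\}$; (2) if $\chi\le\theta^+$, then $m(\theta,\lambda)\le m(\theta,\lambda,\theta,\chi)$; (3) $m(\theta,\theta,\theta,\chi)\le m(\lambda,\lambda,\theta,\chi)\le\max\{m(\theta,\theta,\theta,\chi),m(\theta,\lambda)\}$.
   Context: $m(\theta,\lambda)$ is the least size of $\mathcal Y\subseteq[\lambda]^\theta$ such that every $X\in[\lambda]^\theta$ meets some $Y\in\mathcal Y$ in a set of size $\theta$. For a set $\Delta$ with $|\Delta|\ge\theta$, $m(\Delta,\lambda,\theta,\chi)$ is the least size of a family $\mathcal H$ of functions from $\Delta$ to $[\lambda]^{<\chi}$ such that for every $X\in[\Delta]^\theta$ and every $g:X\to\lambda$ there is $h\in\mathcal H$ with $|\{\xi\in X\mid g(\xi)\in h(\xi)\}|=\theta$. $\mathrm{cf}([\lambda]^\theta,\subseteq)$ is the least size of $\mathcal Y\subseteq[\lambda]^\theta$ such that every $X\in[\lambda]^\theta$ is contained in some member of $\mathcal Y$; $\mathrm{cf}([\lambda]^\theta,\supseteq)$ is the least size of $\mathcal Y\subseteq[\lambda]^\theta$ such that every $X\in[\lambda]^\theta$ contains some member of $\mathcal Y$. *)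

theory Defs
  imports Main
begin


text \<open>Cardinals are represented by sets (via their cardinality card_of A, a well-order
relation).  A cardinal invariant defined as "the least size of a family with
property P" is rendered as the cardinality of some family with property P
whose size is below (\<le>o) the size of every family with property P.\<close>

definition mincard :: "('b set \<Rightarrow> bool) \<Rightarrow> 'b rel" where
  "mincard P = card_of (SOME X. P X \<and> (\<forall>Y. P Y \<longrightarrow> (card_of X, card_of Y) \<in> ordLeq))"

definition subsets_of_size :: "'a set \<Rightarrow> 'a set \<Rightarrow> 'a set set" where
  "subsets_of_size L T = {X. X \<subseteq> L \<and> (card_of X, card_of T) \<in> ordIso}"

definition m_cov :: "'a set \<Rightarrow> 'a set \<Rightarrow> 'a set rel" where
  "m_cov T L = mincard (\<lambda>\<Y>. \<Y> \<subseteq> subsets_of_size L T \<and>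
      (\<forall>X \<in> subsets_of_size L T. \<exists>Y \<in> \<Y>. (card_of (X \<inter> Y), card_of T) \<in> ordIso))"

text \<open>m(Delta, lambda, theta, chi): functions Delta \<rightarrow> [lambda]^{<chi}
  (represented as functions that are empty outside Delta).\<close>
definition m_fun :: "'a set \<Rightarrow> 'a set \<Rightarrow> 'a set \<Rightarrow> 'a set \<Rightarrow> ('a \<Rightarrow> 'a set) rel" where
  "m_fun D L T C = mincard (\<lambda>\<H>.
      (\<forall>h \<in> \<H>. (\<forall>\<xi> \<in> D. h \<xi> \<subseteq> L \<and> (card_of (h \<xi>), card_of C) \<in> ordLess) \<and> (\<forall>\<xi>. \<xi> \<notin> D \<longrightarrow> h \<xi> = {})) \<and>
      (\<forall>X \<in> subsets_of_size D T. \<forall>g. (\<forall>\<xi> \<in> X. g \<xi> \<in> L) \<longrightarrow>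
          (\<exists>h \<in> \<H>. (card_of {\<xi> \<in> X. g \<xi> \<in> h \<xi>}, card_of T) \<in> ordIso)))"

definition cf_sub :: "'a set \<Rightarrow> 'a set \<Rightarrow> 'a set rel" where
  "cf_sub T L = mincard (\<lambda>\<Y>. \<Y> \<subseteq> subsets_of_size L T \<and>
      (\<forall>X \<in> subsets_of_size L T. \<exists>Y \<in> \<Y>. X \<subseteq> Y))"

definition cf_sup :: "'a set \<Rightarrow> 'a set \<Rightarrow> 'a set rel" where
  "cf_sup T L = mincard (\<lambda>\<Y>. \<Y> \<subseteq> subsets_of_size L T \<and>
      (\<forall>X \<in> subsets_of_size L T. \<exists>Y \<in> \<Y>. Y \<subseteq> X))"

end

theory Submission
  imports Defs
begin

context includes cardinal_syntax begin

lemma mincard_ex: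
  assumes "P Y"
  shows "\<exists>X. P X \<and> mincard P = (card_of (X)) \<and> (\<forall>Y. P Y \<longrightarrow> (card_of (X)) \<le>o (card_of (Y)))"
proof -
  obtain r where r: "r \<in> card_of ` Collect P" "\<forall>r'\<in>card_of ` Collect P. r \<le>o r'"
    using exists_minim_Well_order[of "card_of ` Collect P"] assms card_of_Well_order by blast
  then obtain X0 where "P X0 \<and> (\<forall>Y. P Y \<longrightarrow> (card_of (X0)) \<le>o (card_of (Y)))" by auto
  hence "\<exists>X. P X \<and> (\<forall>Y. P Y \<longrightarrow> (card_of (X)) \<le>o (card_of (Y)))" by blast
  from someI_ex[OF this] show ?thesis unfolding mincard_def by blast
qed


lemma mincard_le: "P Y \<Longrightarrow> mincard P \<le>o card_of Y"
proof -
  assume "P Y"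
  then obtain X where "P X" "mincard P = card_of X" "\<forall>Y. P Y \<longrightarrow> card_of X \<le>o card_of Y"
    using mincard_ex by metis
  thus ?thesis using \<open>P Y\<close> by simp
qed

lemma sub_of_size:
  assumes "card_of T \<le>o card_of S"
  shows "\<exists>X. X \<subseteq> S \<and> card_of X =o card_of T"
proof -
  obtain f where f: "inj_on f T" "f ` T \<subseteq> S" using assms card_of_ordLeq by metis
  have "card_of T =o card_of (f ` T)" using card_of_ordIsoI[OF inj_on_imp_bij_betw[OF f(1)]] .
  hence "card_of (f ` T) =o card_of T" by (rule ordIso_symmetric)
  thus ?thesis using f(2) by blast
qed

lemma inj_image_iso: "inj_on f A \<Longrightarrow> card_of (f ` A) =o card_of A"
  by (rule ordIso_symmetric[OF card_of_ordIsoI[OF inj_on_imp_bij_betw]])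

lemma not_le_less: "\<not> card_of A \<le>o card_of B \<Longrightarrow> card_of B <o card_of A"
  using ordLess_or_ordLeq[OF card_of_Well_order card_of_Well_order, of B A] by blast

lemma regular_fibers:
  assumes "infinite T" "regularCard (card_of T)" "card_of T \<le>o card_of A"
    and "\<forall>v. card_of {x\<in>A. g x = v} <o card_of T"
  shows "card_of T \<le>o card_of (g ` A)"
proof (rule ccontr)
  assume "\<not> card_of T \<le>o card_of (g ` A)"
  hence lt: "card_of (g ` A) <o card_of T" by (rule not_le_less)
  have ci: "Cinfinite (card_of T)" using assms(1) by (simp add: cinfinite_def Field_card_of card_of_card_order_on)
  have "card_of (\<Union>v\<in>g ` A. {x\<in>A. g x = v}) <o card_of T"
    using card_of_UNION_ordLess_infinite_Field_regularCard[OF assms(2) ci lt, where A="\<lambda>v. {x\<in>A. g x = v}"] assms(4) by blast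
  moreover have "(\<Union>v\<in>g ` A. {x\<in>A. g x = v}) = A" by auto
  ultimately have "card_of A <o card_of T" by simp
  thus False using assms(3) not_ordLess_ordLeq by blast
qed

definition covP :: "'a set \<Rightarrow> 'a set \<Rightarrow> 'a set set \<Rightarrow> bool" where
  "covP T L YY \<longleftrightarrow> YY \<subseteq> subsets_of_size L T \<and>
      (\<forall>X \<in> subsets_of_size L T. \<exists>Y \<in> YY. card_of (X \<inter> Y) =o card_of T)"

lemma m_cov_eq: "m_cov T L = mincard (covP T L)"
  unfolding m_cov_def covP_def by (rule arg_cong[where f=mincard]) (rule ext, simp)

lemma covP_ex: "covP T L (subsets_of_size L T)"
  unfolding covP_def subsets_of_size_def by auto

lemma L_le_cov:
  assumes "infinite L" "infinite T" "card_of T <o card_of L" "covP T L YY"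
  shows "card_of L \<le>o card_of YY"
proof (rule ccontr)
  assume "\<not> card_of L \<le>o card_of YY"
  hence lt: "card_of YY <o card_of L" by (rule not_le_less)
  have sub: "\<forall>y\<in>YY. y \<subseteq> L \<and> card_of y =o card_of T"
    using assms(4) unfolding covP_def subsets_of_size_def by blast
  hence sub2: "\<forall>y\<in>YY. card_of y \<le>o card_of T" using ordIso_iff_ordLeq by blast
  let ?U = "\<Union>y\<in>YY. y"
  have U: "card_of ?U <o card_of L"
  proof (cases "card_of YY \<le>o card_of T")
    case True
    have "card_of ?U \<le>o card_of T"
      using card_of_UNION_ordLeq_infinite[OF assms(2) True, where A="\<lambda>y. y"] sub2 by blast
    thus ?thesis by (rule ordLeq_ordLess_trans[OF _ assms(3)])
  next
    case False
    hence "card_of T <o card_of YY" by (rule not_le_less)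
    hence TY: "card_of T \<le>o card_of YY" by (rule ordLess_imp_ordLeq)
    hence inf: "infinite YY" using card_of_ordLeq_infinite assms(2) by blast
    have "\<forall>y\<in>YY. card_of y \<le>o card_of YY"
    proof
      fix y assume "y \<in> YY"
      hence "card_of y \<le>o card_of T" using sub2 by blast
      thus "card_of y \<le>o card_of YY" by (rule ordLeq_transitive[OF _ TY])
    qed
    hence "card_of ?U \<le>o card_of YY"
      using card_of_UNION_ordLeq_infinite[OF inf ordLeq_refl[OF card_of_Card_order], where A="\<lambda>y. y"] by blast
    thus ?thesis by (rule ordLeq_ordLess_trans[OF _ lt])
  qed
  have "card_of L \<le>o card_of (L - ?U)"
  proof (rule ccontr)
    assume "\<not> card_of L \<le>o card_of (L - ?U)"
    hence "card_of (L - ?U) <o card_of L" by (rule not_le_less)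
    hence "card_of ((L - ?U) \<union> ?U) <o card_of L" by (rule card_of_Un_ordLess_infinite[OF assms(1) _ U])
    moreover have "(L - ?U) \<union> ?U = L" using sub by blast
    ultimately have "card_of L <o card_of L" by simp
    thus False using ordLess_irreflexive by blast
  qed
  hence TL: "card_of T \<le>o card_of (L - ?U)" by (rule ordLeq_transitive[OF ordLess_imp_ordLeq[OF assms(3)]])
  obtain X where X: "X \<subseteq> L - ?U" "card_of X =o card_of T" using sub_of_size[OF TL] by blast
  have "X \<subseteq> L" using X(1) by blast
  hence "X \<in> subsets_of_size L T" unfolding subsets_of_size_def using X(2) by blast
  then obtain y where y: "y \<in> YY" "card_of (X \<inter> y) =o card_of T" using assms(4) unfolding covP_def by blast
  have "X \<inter> y = {}" using X(1) y(1) by blast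
  have "card_of T =o card_of (X \<inter> y)" using y(2) by (rule ordIso_symmetric)
  hence "T = {}" unfolding \<open>X \<inter> y = {}\<close> by (rule card_of_empty2)
  thus False using assms(2) by simp
qed


lemma times_le: "infinite M \<Longrightarrow> card_of A \<le>o card_of M \<Longrightarrow> card_of B \<le>o card_of M \<Longrightarrow> card_of (A \<times> B) \<le>o card_of M"
  using card_of_Times_ordLeq_infinite_Field[of "card_of M" A B] by (simp add: Field_card_of card_of_card_order_on)

lemma un_le: "infinite M \<Longrightarrow> card_of A \<le>o card_of M \<Longrightarrow> card_of B \<le>o card_of M \<Longrightarrow> card_of (A \<union> B) \<le>o card_of M"
  using card_of_Un_ordLeq_infinite_Field[of "card_of M" A B] by (simp add: Field_card_of card_of_card_order_on)

lemma iso_between: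
  assumes "S \<subseteq> X" "card_of X =o card_of T" "card_of T \<le>o card_of S'" "S' \<subseteq> S"
  shows "card_of S =o card_of T"
proof -
  have "card_of S \<le>o card_of X" using assms(1) by (rule card_of_mono1)
  moreover have "card_of X \<le>o card_of T" using assms(2) ordIso_iff_ordLeq by blast
  ultimately have a: "card_of S \<le>o card_of T" by (rule ordLeq_transitive)
  have "card_of S' \<le>o card_of S" using assms(4) by (rule card_of_mono1)
  with assms(3) have b: "card_of T \<le>o card_of S" by (rule ordLeq_transitive)
  show ?thesis using a b ordIso_iff_ordLeq by blast
qed

definition subP :: "'a set \<Rightarrow> 'a set \<Rightarrow> 'a set set \<Rightarrow> bool" where
  "subP T L YY \<longleftrightarrow> YY \<subseteq> subsets_of_size L T \<and> (\<forall>X \<in> subsets_of_size L T. \<exists>Y \<in> YY. X \<subseteq> Y)"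

definition supP :: "'a set \<Rightarrow> 'a set \<Rightarrow> 'a set set \<Rightarrow> bool" where
  "supP T L YY \<longleftrightarrow> YY \<subseteq> subsets_of_size L T \<and> (\<forall>X \<in> subsets_of_size L T. \<exists>Y \<in> YY. Y \<subseteq> X)"

lemma cf_sub_eq: "cf_sub T L = mincard (subP T L)"
  unfolding cf_sub_def subP_def by (rule arg_cong[where f=mincard]) (rule ext, simp)

lemma cf_sup_eq: "cf_sup T L = mincard (supP T L)"
  unfolding cf_sup_def supP_def by (rule arg_cong[where f=mincard]) (rule ext, simp)

lemma subP_ex: "subP T L (subsets_of_size L T)"
  unfolding subP_def by blast

lemma supP_ex: "supP T L (subsets_of_size L T)"
  unfolding supP_def by blast

lemma subP_covP: "subP T L YY \<Longrightarrow> covP T L YY"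
  unfolding subP_def covP_def
proof (intro conjI ballI; elim conjE)
  fix X assume a: "YY \<subseteq> subsets_of_size L T" "\<forall>X\<in>subsets_of_size L T. \<exists>Y\<in>YY. X \<subseteq> Y"
    and X: "X \<in> subsets_of_size L T"
  then obtain Y where "Y \<in> YY" "X \<subseteq> Y" by blast
  moreover have "card_of X =o card_of T" using X unfolding subsets_of_size_def by blast
  ultimately show "\<exists>Y\<in>YY. card_of (X \<inter> Y) =o card_of T"
    by (metis Int_absorb2)
qed auto

lemma supP_covP: "supP T L YY \<Longrightarrow> covP T L YY"
  unfolding supP_def covP_def
proof (intro conjI ballI; elim conjE)
  fix X assume a: "YY \<subseteq> subsets_of_size L T" "\<forall>X\<in>subsets_of_size L T. \<exists>Y\<in>YY. Y \<subseteq> X"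
    and X: "X \<in> subsets_of_size L T"
  then obtain Y where "Y \<in> YY" "Y \<subseteq> X" by blast
  moreover have "card_of Y =o card_of T" using \<open>Y \<in> YY\<close> a(1) unfolding subsets_of_size_def by blast
  ultimately show "\<exists>Y\<in>YY. card_of (X \<inter> Y) =o card_of T"
    by (metis Int_absorb1)
qed auto

definition funP :: "'a set \<Rightarrow> 'a set \<Rightarrow> 'a set \<Rightarrow> 'a set \<Rightarrow> ('a \<Rightarrow> 'a set) set \<Rightarrow> bool" where
  "funP D L T C H \<longleftrightarrow>
      (\<forall>h \<in> H. (\<forall>\<xi> \<in> D. h \<xi> \<subseteq> L \<and> card_of (h \<xi>) <o card_of C) \<and> (\<forall>\<xi>. \<xi> \<notin> D \<longrightarrow> h \<xi> = {})) \<and>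
      (\<forall>X \<in> subsets_of_size D T. \<forall>g. (\<forall>\<xi> \<in> X. g \<xi> \<in> L) \<longrightarrow>
          (\<exists>h \<in> H. card_of {\<xi> \<in> X. g \<xi> \<in> h \<xi>} =o card_of T))"

lemma m_fun_eq: "m_fun D L T C = mincard (funP D L T C)"
  unfolding m_fun_def funP_def by (rule arg_cong[where f=mincard]) (rule ext, simp)

lemma singl_less:
  assumes "(finite C \<and> card C = 2) \<or> infinite C"
  shows "card_of {v} <o card_of C"
  using assms
proof
  assume "finite C \<and> card C = 2"
  then obtain a b where ab: "C = {a, b}" "a \<noteq> b" by (meson card_2_iff)
  have "\<not> card_of C \<le>o card_of {v}"
  proof
    assume "card_of C \<le>o card_of {v}"
    then obtain f where "inj_on f C" "f ` C \<subseteq> {v}" using card_of_ordLeq by metis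
    thus False using ab unfolding inj_on_def by blast
  qed
  thus ?thesis by (rule not_le_less)
next
  assume "infinite C"
  thus ?thesis using finite_ordLess_infinite[OF card_of_Well_order card_of_Well_order, of "{v}" C]
    by (simp add: Field_card_of)
qed

lemma empty_less:
  assumes "(finite C \<and> card C = 2) \<or> infinite C"
  shows "card_of {} <o card_of C"
  by (rule ordLeq_ordLess_trans[OF card_of_empty singl_less[OF assms]])

lemma funP_ex:
  assumes "(finite C \<and> card C = 2) \<or> infinite C"
  shows "funP D L T C {h. (\<forall>\<xi> \<in> D. h \<xi> \<subseteq> L \<and> card_of (h \<xi>) <o card_of C) \<and> (\<forall>\<xi>. \<xi> \<notin> D \<longrightarrow> h \<xi> = {})}"
  unfolding funP_def
proof (intro conjI ballI allI impI)
  fix X g assume X: "X \<in> subsets_of_size D T" and g: "\<forall>\<xi>\<in>X. g \<xi> \<in> L"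
  let ?h = "\<lambda>\<xi>. if \<xi> \<in> X then {g \<xi>} else {}"
  have XD: "X \<subseteq> D" and XT: "card_of X =o card_of T" using X unfolding subsets_of_size_def by auto
  have "\<forall>\<xi>\<in>D. ?h \<xi> \<subseteq> L \<and> card_of (?h \<xi>) <o card_of C"
    using g singl_less[OF assms] empty_less[OF assms] by auto
  moreover have "\<forall>\<xi>. \<xi> \<notin> D \<longrightarrow> ?h \<xi> = {}" using XD by auto
  moreover have "{\<xi> \<in> X. g \<xi> \<in> ?h \<xi>} = X" by auto
  ultimately show "\<exists>h\<in>{h. (\<forall>\<xi>\<in>D. h \<xi> \<subseteq> L \<and> card_of (h \<xi>) <o card_of C) \<and> (\<forall>\<xi>. \<xi> \<notin> D \<longrightarrow> h \<xi> = {})}.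
          card_of {\<xi> \<in> X. g \<xi> \<in> h \<xi>} =o card_of T"
    using XT by (intro bexI[of _ ?h]) auto
qed auto

lemma part2:
  assumes T: "infinite T" and TL: "card_of T <o card_of L"
    and C: "card_of C \<le>o cardSuc (card_of T)" and H: "funP T L T C H"
  shows "m_cov T L \<le>o card_of H"
proof -
  have "card_of T \<le>o card_of L" using TL by (rule ordLess_imp_ordLeq)
  then obtain X0 where X0: "X0 \<subseteq> L" "card_of X0 =o card_of T" using sub_of_size by blast
  define Yh where "Yh h = (\<Union>\<xi>\<in>T. h \<xi>) \<union> X0" for h :: "'a \<Rightarrow> 'a set"
  have Hp: "\<forall>h\<in>H. (\<forall>\<xi> \<in> T. h \<xi> \<subseteq> L \<and> card_of (h \<xi>) <o card_of C)"
    using H unfolding funP_def by blast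
  have mem: "Yh h \<in> subsets_of_size L T" if h: "h \<in> H" for h
  proof -
    have sub: "Yh h \<subseteq> L" using Hp h X0(1) unfolding Yh_def by blast
    have "\<forall>\<xi>\<in>T. card_of (h \<xi>) \<le>o card_of T"
    proof
      fix \<xi> assume "\<xi> \<in> T"
      hence "card_of (h \<xi>) <o card_of C" using Hp h by blast
      hence "card_of (h \<xi>) <o cardSuc (card_of T)" by (rule ordLess_ordLeq_trans[OF _ C])
      thus "card_of (h \<xi>) \<le>o card_of T"
        using cardSuc_ordLeq_ordLess[OF card_of_Card_order card_of_Card_order] by blast
    qed
    hence "card_of (\<Union>\<xi>\<in>T. h \<xi>) \<le>o card_of T"
      using card_of_UNION_ordLeq_infinite[OF T ordLeq_refl[OF card_of_Card_order], where A=h] by blast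
    moreover have "card_of X0 \<le>o card_of T" using X0(2) by (rule ordIso_imp_ordLeq)
    ultimately have le: "card_of (Yh h) \<le>o card_of T" unfolding Yh_def by (rule un_le[OF T])
    have "card_of X0 \<le>o card_of (Yh h)" unfolding Yh_def by (rule card_of_mono1) blast
    hence "card_of T \<le>o card_of (Yh h)"
      by (rule ordLeq_transitive[OF ordIso_imp_ordLeq[OF ordIso_symmetric[OF X0(2)]]])
    hence "card_of (Yh h) =o card_of T" using le by (simp add: ordIso_iff_ordLeq)
    thus ?thesis using sub unfolding subsets_of_size_def by blast
  qed
  have "covP T L (Yh ` H)"
    unfolding covP_def
  proof (intro conjI ballI)
    show "Yh ` H \<subseteq> subsets_of_size L T" using mem by blast
  next
    fix X assume X: "X \<in> subsets_of_size L T"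
    hence XL: "X \<subseteq> L" and XT: "card_of X =o card_of T" unfolding subsets_of_size_def by auto
    have "card_of T =o card_of X" using XT by (rule ordIso_symmetric)
    then obtain e where e: "bij_betw e T X" using card_of_ordIso by metis
    have TT: "T \<in> subsets_of_size T T" unfolding subsets_of_size_def using card_of_refl by blast
    have eL: "\<forall>\<xi>\<in>T. e \<xi> \<in> L" using e XL unfolding bij_betw_def by blast
    obtain h where h: "h \<in> H" "card_of {\<xi> \<in> T. e \<xi> \<in> h \<xi>} =o card_of T"
      using H TT eL unfolding funP_def by blast
    let ?S = "{\<xi> \<in> T. e \<xi> \<in> h \<xi>}"
    have inj: "inj_on e ?S" using e unfolding bij_betw_def by (rule inj_on_subset[OF conjunct1]) blast
    have "card_of (e ` ?S) =o card_of ?S" using inj by (rule inj_image_iso)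
    hence "card_of T =o card_of (e ` ?S)"
      by (rule ordIso_transitive[OF ordIso_symmetric[OF h(2)] ordIso_symmetric])
    hence "card_of T \<le>o card_of (e ` ?S)" by (rule ordIso_imp_ordLeq)
    moreover have "e ` ?S \<subseteq> X \<inter> Yh h" using e unfolding bij_betw_def Yh_def by blast
    ultimately have "card_of (X \<inter> Yh h) =o card_of T"
      by (intro iso_between[OF _ XT]) auto
    thus "\<exists>Y\<in>Yh ` H. card_of (X \<inter> Y) =o card_of T" using h(1) by blast
  qed
  hence "m_cov T L \<le>o card_of (Yh ` H)" unfolding m_cov_eq by (rule mincard_le)
  thus ?thesis by (rule ordLeq_transitive[OF _ card_of_image])
qed

lemma funPI:
  assumes "\<forall>h\<in>H. \<forall>\<xi>\<in>D. h \<xi> \<subseteq> L \<and> card_of (h \<xi>) <o card_of C"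
    and "\<forall>h\<in>H. \<forall>\<xi>. \<xi> \<notin> D \<longrightarrow> h \<xi> = {}"
    and "\<forall>X \<in> subsets_of_size D T. \<forall>g. (\<forall>\<xi> \<in> X. g \<xi> \<in> L) \<longrightarrow>
          (\<exists>h \<in> H. card_of {\<xi> \<in> X. g \<xi> \<in> h \<xi>} =o card_of T)"
  shows "funP D L T C H"
proof -
  have a: "\<forall>h\<in>H. (\<forall>\<xi>\<in>D. h \<xi> \<subseteq> L \<and> card_of (h \<xi>) <o card_of C) \<and> (\<forall>\<xi>. \<xi> \<notin> D \<longrightarrow> h \<xi> = {})"
  proof
    fix h assume "h \<in> H"
    thus "(\<forall>\<xi>\<in>D. h \<xi> \<subseteq> L \<and> card_of (h \<xi>) <o card_of C) \<and> (\<forall>\<xi>. \<xi> \<notin> D \<longrightarrow> h \<xi> = {})"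
      using assms(1,2) by simp
  qed
  show ?thesis unfolding funP_def using a assms(3) by (rule conjI)
qed

lemma part3a:
  assumes TL: "card_of T \<le>o card_of L" and H: "funP L L T C H"
    and C: "(finite C \<and> card C = 2) \<or> infinite C"
  shows "m_fun T T T C \<le>o card_of H"
proof -
  obtain e where e: "inj_on e T" "e ` T \<subseteq> L" using TL card_of_ordLeq by metis
  define F where "F h = (\<lambda>\<xi>. if \<xi> \<in> T then {\<zeta> \<in> T. e \<zeta> \<in> h (e \<xi>)} else {})" for h :: "'a \<Rightarrow> 'a set"
  have Hp: "\<forall>h\<in>H. (\<forall>\<xi> \<in> L. h \<xi> \<subseteq> L \<and> card_of (h \<xi>) <o card_of C)"
    using H unfolding funP_def by blast
  have Hc: "\<forall>X \<in> subsets_of_size L T. \<forall>g. (\<forall>\<xi> \<in> X. g \<xi> \<in> L) \<longrightarrow>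
          (\<exists>h \<in> H. card_of {\<xi> \<in> X. g \<xi> \<in> h \<xi>} =o card_of T)"
    using H unfolding funP_def by blast
  have A1: "\<forall>h'\<in>F ` H. \<forall>\<xi>\<in>T. h' \<xi> \<subseteq> T \<and> card_of (h' \<xi>) <o card_of C"
  proof (intro ballI)
    fix h' \<xi> assume h': "h' \<in> F ` H" and \<xi>: "\<xi> \<in> T"
    then obtain h where h: "h \<in> H" "h' = F h" by blast
    have "e \<xi> \<in> L" using e \<xi> by blast
    hence lt: "card_of (h (e \<xi>)) <o card_of C" using Hp h(1) by blast
    have "card_of {\<zeta> \<in> T. e \<zeta> \<in> h (e \<xi>)} \<le>o card_of (h (e \<xi>))"
      by (rule card_of_ordLeqI[of e]) (auto intro: inj_on_subset[OF e(1)])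
    hence "card_of {\<zeta> \<in> T. e \<zeta> \<in> h (e \<xi>)} <o card_of C" by (rule ordLeq_ordLess_trans[OF _ lt])
    thus "h' \<xi> \<subseteq> T \<and> card_of (h' \<xi>) <o card_of C" using h(2) \<xi> unfolding F_def by auto
  qed
  have A2: "\<forall>h'\<in>F ` H. \<forall>\<xi>. \<xi> \<notin> T \<longrightarrow> h' \<xi> = {}" unfolding F_def by auto
  have A3: "\<forall>X \<in> subsets_of_size T T. \<forall>g. (\<forall>\<xi> \<in> X. g \<xi> \<in> T) \<longrightarrow>
          (\<exists>h \<in> F ` H. card_of {\<xi> \<in> X. g \<xi> \<in> h \<xi>} =o card_of T)"
  proof (intro ballI allI impI)
    fix X g assume X: "X \<in> subsets_of_size T T" and g: "\<forall>\<xi>\<in>X. g \<xi> \<in> T"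
    have XT: "X \<subseteq> T" and XTc: "card_of X =o card_of T" using X unfolding subsets_of_size_def by auto
    have injX: "inj_on e X" using e(1) XT by (rule inj_on_subset)
    let ?X' = "e ` X"
    let ?g' = "\<lambda>\<eta>. e (g (inv_into X e \<eta>))"
    have "card_of ?X' =o card_of X" using injX by (rule inj_image_iso)
    hence "card_of ?X' =o card_of T" using XTc by (rule ordIso_transitive)
    moreover have "?X' \<subseteq> L" using e XT by blast
    ultimately have X': "?X' \<in> subsets_of_size L T" unfolding subsets_of_size_def by blast
    have g': "\<forall>\<eta>\<in>?X'. ?g' \<eta> \<in> L"
    proof
      fix \<eta> assume "\<eta> \<in> ?X'"
      then obtain \<xi> where "\<xi> \<in> X" "\<eta> = e \<xi>" by blast
      thus "?g' \<eta> \<in> L" using inv_into_f_f[OF injX] g e XT by auto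
    qed
    obtain h where h: "h \<in> H" "card_of {\<eta> \<in> ?X'. ?g' \<eta> \<in> h \<eta>} =o card_of T"
      using mp[OF spec[OF bspec[OF Hc X'], where x="?g'"] g'] by blast
    let ?S = "{\<xi> \<in> X. g \<xi> \<in> F h \<xi>}"
    have eq: "e ` ?S = {\<eta> \<in> ?X'. ?g' \<eta> \<in> h \<eta>}"
    proof (rule set_eqI, rule iffI)
      fix \<eta> assume "\<eta> \<in> e ` ?S"
      then obtain \<xi> where "\<xi> \<in> X" "g \<xi> \<in> F h \<xi>" "\<eta> = e \<xi>" by blast
      thus "\<eta> \<in> {\<eta> \<in> ?X'. ?g' \<eta> \<in> h \<eta>}" using inv_into_f_f[OF injX] XT unfolding F_def by auto
    next
      fix \<eta> assume "\<eta> \<in> {\<eta> \<in> ?X'. ?g' \<eta> \<in> h \<eta>}"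
      then obtain \<xi> where "\<xi> \<in> X" "\<eta> = e \<xi>" "e (g \<xi>) \<in> h (e \<xi>)" using inv_into_f_f[OF injX] by auto
      thus "\<eta> \<in> e ` ?S" using g XT unfolding F_def by auto
    qed
    have "card_of (e ` ?S) =o card_of ?S" by (rule inj_image_iso[OF inj_on_subset[OF injX]]) blast
    hence "card_of ?S =o card_of T" using h(2) unfolding eq
      by (rule ordIso_transitive[OF ordIso_symmetric])
    thus "\<exists>h'\<in>F ` H. card_of {\<xi> \<in> X. g \<xi> \<in> h' \<xi>} =o card_of T" using h(1) by blast
  qed
  have "funP T T T C (F ` H)" using A1 A2 A3 by (rule funPI)
  hence "m_fun T T T C \<le>o card_of (F ` H)" unfolding m_fun_eq by (rule mincard_le)
  thus ?thesis by (rule ordLeq_transitive[OF _ card_of_image])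
qed

lemma part3b:
  assumes L: "infinite L" and T: "infinite T" and reg: "regularCard (card_of T)"
    and C: "(finite C \<and> card C = 2) \<or> infinite C"
    and Y: "covP T L YY" and H0: "funP T T T C H0" and LY: "card_of L \<le>o card_of YY"
  shows "\<exists>H. funP L L T C H \<and> (card_of H \<le>o card_of H0 \<or> card_of H \<le>o card_of YY)"
proof -
  have Ysub: "\<forall>Y\<in>YY. Y \<subseteq> L \<and> card_of Y =o card_of T"
    using Y unfolding covP_def subsets_of_size_def by blast
  have Ycov: "\<forall>X\<in>subsets_of_size L T. \<exists>Y\<in>YY. card_of (X \<inter> Y) =o card_of T"
    using Y unfolding covP_def by blast
  have H0p: "\<forall>h\<in>H0. \<forall>\<xi>\<in>T. h \<xi> \<subseteq> T \<and> card_of (h \<xi>) <o card_of C"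
    using H0 unfolding funP_def by blast
  have H0c: "\<forall>X \<in> subsets_of_size T T. \<forall>g. (\<forall>\<xi> \<in> X. g \<xi> \<in> T) \<longrightarrow>
          (\<exists>h \<in> H0. card_of {\<xi> \<in> X. g \<xi> \<in> h \<xi>} =o card_of T)"
    using H0 unfolding funP_def by blast
  define p where "p Y = (SOME f. bij_betw f Y T)" for Y :: "'a set"
  have pb: "bij_betw (p Y) Y T" if "Y \<in> YY" for Y
  proof -
    have "card_of Y =o card_of T" using Ysub that by blast
    hence "\<exists>f. bij_betw f Y T" by (simp only: card_of_ordIso)
    thus ?thesis unfolding p_def by (rule someI_ex)
  qed
  define F where "F = (\<lambda>(Y, Y', h0::'a \<Rightarrow> 'a set). \<lambda>\<eta>. if \<eta> \<in> Y then {v \<in> Y'. p Y' v \<in> h0 (p Y \<eta>)} else {})"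
  have Fapp: "F (Y, Y', h0) \<eta> = (if \<eta> \<in> Y then {v \<in> Y'. p Y' v \<in> h0 (p Y \<eta>)} else {})" for Y Y' h0 \<eta>
    unfolding F_def by simp
  define K where "K v = (\<lambda>\<eta>. if \<eta> \<in> L then {v} else ({}::'a set))" for v :: 'a
  define H where "H = F ` (YY \<times> YY \<times> H0) \<union> K ` L"
  have A1: "\<forall>h\<in>H. \<forall>\<xi>\<in>L. h \<xi> \<subseteq> L \<and> card_of (h \<xi>) <o card_of C"
  proof (intro ballI)
    fix h \<xi> assume h: "h \<in> H" and \<xi>: "\<xi> \<in> L"
    show "h \<xi> \<subseteq> L \<and> card_of (h \<xi>) <o card_of C"
    proof (cases "h \<in> K ` L")
      case True
      then obtain v where "v \<in> L" "h = K v" by blast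
      thus ?thesis using \<xi> singl_less[OF C] unfolding K_def by simp
    next
      case False
      then obtain Y Y' h0 where Yh: "Y \<in> YY" "Y' \<in> YY" "h0 \<in> H0" "h = F (Y, Y', h0)"
        using h unfolding H_def by blast
      show ?thesis
      proof (cases "\<xi> \<in> Y")
        case True
        have pY: "p Y \<xi> \<in> T" using pb[OF Yh(1)] True unfolding bij_betw_def by blast
        hence lt: "card_of (h0 (p Y \<xi>)) <o card_of C" using H0p Yh(3) by blast
        have injY': "inj_on (p Y') Y'" using pb[OF Yh(2)] unfolding bij_betw_def by blast
        have "card_of {v \<in> Y'. p Y' v \<in> h0 (p Y \<xi>)} \<le>o card_of (h0 (p Y \<xi>))"
          by (rule card_of_ordLeqI[of "p Y'"]) (auto intro: inj_on_subset[OF injY'])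
        hence "card_of {v \<in> Y'. p Y' v \<in> h0 (p Y \<xi>)} <o card_of C" by (rule ordLeq_ordLess_trans[OF _ lt])
        moreover have "Y' \<subseteq> L" using Ysub Yh(2) by blast
        ultimately show ?thesis using True Yh(4) Fapp by auto
      next
        case False
        thus ?thesis using Yh(4) Fapp empty_less[OF C] by auto
      qed
    qed
  qed
  have A2: "\<forall>h\<in>H. \<forall>\<xi>. \<xi> \<notin> L \<longrightarrow> h \<xi> = {}"
  proof (intro ballI allI impI)
    fix h \<xi> assume h: "h \<in> H" and \<xi>: "\<xi> \<notin> L"
    show "h \<xi> = {}"
    proof (cases "h \<in> K ` L")
      case True
      thus ?thesis using \<xi> unfolding K_def by auto
    next
      case False
      then obtain Y Y' h0 where Yh: "Y \<in> YY" "Y' \<in> YY" "h0 \<in> H0" "h = F (Y, Y', h0)"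
        using h unfolding H_def by blast
      have "\<xi> \<notin> Y" using Ysub Yh(1) \<xi> by blast
      thus ?thesis using Yh(4) Fapp by simp
    qed
  qed
  have A3: "\<forall>X \<in> subsets_of_size L T. \<forall>g. (\<forall>\<xi> \<in> X. g \<xi> \<in> L) \<longrightarrow>
          (\<exists>h \<in> H. card_of {\<xi> \<in> X. g \<xi> \<in> h \<xi>} =o card_of T)"
  proof (intro ballI allI impI)
    fix X g assume X: "X \<in> subsets_of_size L T" and g: "\<forall>\<xi>\<in>X. g \<xi> \<in> L"
    have XL: "X \<subseteq> L" and XT: "card_of X =o card_of T" using X unfolding subsets_of_size_def by auto
    obtain Y where Y: "Y \<in> YY" "card_of (X \<inter> Y) =o card_of T" using Ycov X by blast
    define A where "A = X \<inter> Y"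
    have TA: "card_of T \<le>o card_of A" unfolding A_def by (rule ordIso_imp_ordLeq[OF ordIso_symmetric[OF Y(2)]])
    show "\<exists>h\<in>H. card_of {\<xi> \<in> X. g \<xi> \<in> h \<xi>} =o card_of T"
    proof (cases "\<exists>v. card_of T \<le>o card_of {x\<in>A. g x = v}")
      case True
      then obtain v where v: "card_of T \<le>o card_of {x\<in>A. g x = v}" by blast
      have "{x\<in>A. g x = v} \<noteq> {}"
      proof
        assume E: "{x\<in>A. g x = v} = {}"
        have "card_of T \<le>o card_of ({}::'a set)" using v by (simp only: E)
        hence "T = {}" by (rule card_of_empty3)
        thus False using T by simp
      qed
      then obtain x where "x \<in> A" "g x = v" by blast
      hence vL: "v \<in> L" using g unfolding A_def by blast
      hence KH: "K v \<in> H" unfolding H_def by blast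
      have sub: "{x\<in>A. g x = v} \<subseteq> {\<xi> \<in> X. g \<xi> \<in> K v \<xi>}" using XL unfolding A_def K_def by auto
      have "card_of {\<xi> \<in> X. g \<xi> \<in> K v \<xi>} =o card_of T"
        by (rule iso_between[OF _ XT v sub]) blast
      thus ?thesis using KH by blast
    next
      case False
      have fib: "\<forall>v. card_of {x\<in>A. g x = v} <o card_of T"
      proof
        fix v
        have "\<not> card_of T \<le>o card_of {x\<in>A. g x = v}" using False by blast
        thus "card_of {x\<in>A. g x = v} <o card_of T" by (rule not_le_less)
      qed
      have TgA: "card_of T \<le>o card_of (g ` A)" by (rule regular_fibers[OF T reg TA fib])
      have gAle: "card_of (g ` A) \<le>o card_of T"
        unfolding A_def by (rule ordLeq_transitive[OF card_of_image ordIso_imp_ordLeq[OF Y(2)]])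
      have gAL: "g ` A \<subseteq> L" using g unfolding A_def by blast
      have "card_of (g ` A) =o card_of T" using TgA gAle by (simp add: ordIso_iff_ordLeq)
      hence gAmem: "g ` A \<in> subsets_of_size L T" unfolding subsets_of_size_def using gAL by blast
      obtain Y' where Y': "Y' \<in> YY" "card_of (g ` A \<inter> Y') =o card_of T" using Ycov gAmem by blast
      define B where "B = {x\<in>A. g x \<in> Y'}"
      have gB: "g ` B = g ` A \<inter> Y'" unfolding B_def by auto
      have "card_of T \<le>o card_of (g ` B)" unfolding gB by (rule ordIso_imp_ordLeq[OF ordIso_symmetric[OF Y'(2)]])
      hence TB: "card_of T \<le>o card_of B" by (rule ordLeq_transitive[OF _ card_of_image])
      have BX: "B \<subseteq> X" "B \<subseteq> Y" unfolding B_def A_def by auto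
      have BT: "card_of B =o card_of T" by (rule iso_between[OF BX(1) XT TB]) blast
      have injY: "inj_on (p Y) Y" using pb[OF Y(1)] unfolding bij_betw_def by blast
      have pYT: "\<forall>x\<in>Y. p Y x \<in> T" using pb[OF Y(1)] unfolding bij_betw_def by blast
      have pY'T: "\<forall>x\<in>Y'. p Y' x \<in> T" using pb[OF Y'(1)] unfolding bij_betw_def by blast
      define Z where "Z = p Y ` B"
      have injB: "inj_on (p Y) B" using injY BX(2) by (rule inj_on_subset)
      have "card_of Z =o card_of B" unfolding Z_def using injB by (rule inj_image_iso)
      hence ZT: "card_of Z =o card_of T" using BT by (rule ordIso_transitive)
      have "Z \<subseteq> T" unfolding Z_def using pYT BX(2) by blast
      hence Zmem: "Z \<in> subsets_of_size T T" unfolding subsets_of_size_def using ZT by blast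
      define g2 where "g2 \<zeta> = p Y' (g (inv_into Y (p Y) \<zeta>))" for \<zeta>
      have inv: "\<forall>x\<in>B. inv_into Y (p Y) (p Y x) = x" using inv_into_f_f[OF injY] BX(2) by blast
      have g2T: "\<forall>\<zeta>\<in>Z. g2 \<zeta> \<in> T"
      proof
        fix \<zeta> assume "\<zeta> \<in> Z"
        then obtain x where x: "x \<in> B" "\<zeta> = p Y x" unfolding Z_def by blast
        hence "g x \<in> Y'" unfolding B_def by blast
        thus "g2 \<zeta> \<in> T" using x inv pY'T unfolding g2_def by simp
      qed
      obtain h0 where h0: "h0 \<in> H0" "card_of {\<zeta> \<in> Z. g2 \<zeta> \<in> h0 \<zeta>} =o card_of T"
        using mp[OF spec[OF bspec[OF H0c Zmem], where x=g2] g2T] by blast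
      define h where "h = F (Y, Y', h0)"
      have hH: "h \<in> H" unfolding H_def h_def using Y(1) Y'(1) h0(1) by blast
      define S' where "S' = {x\<in>B. g x \<in> h x}"
      have eq: "p Y ` S' = {\<zeta> \<in> Z. g2 \<zeta> \<in> h0 \<zeta>}"
      proof (rule set_eqI, rule iffI)
        fix \<zeta> assume "\<zeta> \<in> p Y ` S'"
        then obtain x where x: "x \<in> B" "g x \<in> h x" "\<zeta> = p Y x" unfolding S'_def by blast
        have "x \<in> Y" using x(1) BX(2) by blast
        hence "p Y' (g x) \<in> h0 (p Y x)" using x(2) unfolding h_def Fapp by simp
        thus "\<zeta> \<in> {\<zeta> \<in> Z. g2 \<zeta> \<in> h0 \<zeta>}" using x(1,3) inv unfolding g2_def Z_def by simp
      next
        fix \<zeta> assume "\<zeta> \<in> {\<zeta> \<in> Z. g2 \<zeta> \<in> h0 \<zeta>}"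
        then obtain x where x: "x \<in> B" "\<zeta> = p Y x" "g2 \<zeta> \<in> h0 \<zeta>" unfolding Z_def by blast
        have "x \<in> Y" using x(1) BX(2) by blast
        moreover have "g x \<in> Y'" using x(1) unfolding B_def by blast
        moreover have "p Y' (g x) \<in> h0 (p Y x)" using x inv unfolding g2_def by simp
        ultimately have "g x \<in> h x" unfolding h_def Fapp by simp
        thus "\<zeta> \<in> p Y ` S'" using x(1,2) unfolding S'_def by blast
      qed
      have "card_of (p Y ` S') =o card_of S'"
        by (rule inj_image_iso[OF inj_on_subset[OF injB]]) (auto simp: S'_def)
      hence "card_of S' =o card_of T" using h0(2) unfolding eq
        by (rule ordIso_transitive[OF ordIso_symmetric])
      hence TS: "card_of T \<le>o card_of S'" by (rule ordIso_imp_ordLeq[OF ordIso_symmetric])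
      have "card_of {\<xi> \<in> X. g \<xi> \<in> h \<xi>} =o card_of T"
        by (rule iso_between[OF _ XT TS]) (auto simp: S'_def B_def A_def)
      thus ?thesis using hH by blast
    qed
  qed
  have funH: "funP L L T C H" using A1 A2 A3 by (rule funPI)
  have cF: "card_of (F ` (YY \<times> YY \<times> H0)) \<le>o card_of (YY \<times> YY \<times> H0)" by (rule card_of_image)
  have cK: "card_of (K ` L) \<le>o card_of L" by (rule card_of_image)
  have infY: "infinite YY" using card_of_ordLeq_infinite[OF LY L] .
  have "card_of H \<le>o card_of H0 \<or> card_of H \<le>o card_of YY"
  proof (cases "card_of H0 \<le>o card_of YY")
    case True
    have r: "card_of YY \<le>o card_of YY" by (rule ordLeq_refl[OF card_of_Card_order])
    have "card_of (YY \<times> H0) \<le>o card_of YY" by (rule times_le[OF infY r True])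
    hence "card_of (YY \<times> YY \<times> H0) \<le>o card_of YY" by (rule times_le[OF infY r])
    hence a: "card_of (F ` (YY \<times> YY \<times> H0)) \<le>o card_of YY" by (rule ordLeq_transitive[OF cF])
    have b: "card_of (K ` L) \<le>o card_of YY" by (rule ordLeq_transitive[OF cK LY])
    have "card_of H \<le>o card_of YY" unfolding H_def by (rule un_le[OF infY a b])
    thus ?thesis by blast
  next
    case False
    hence "card_of YY <o card_of H0" by (rule not_le_less)
    hence YH: "card_of YY \<le>o card_of H0" by (rule ordLess_imp_ordLeq)
    have infH: "infinite H0" using card_of_ordLeq_infinite[OF YH infY] .
    have r: "card_of H0 \<le>o card_of H0" by (rule ordLeq_refl[OF card_of_Card_order])
    have "card_of (YY \<times> H0) \<le>o card_of H0" by (rule times_le[OF infH YH r])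
    hence "card_of (YY \<times> YY \<times> H0) \<le>o card_of H0" by (rule times_le[OF infH YH])
    hence a: "card_of (F ` (YY \<times> YY \<times> H0)) \<le>o card_of H0" by (rule ordLeq_transitive[OF cF])
    have b: "card_of (K ` L) \<le>o card_of H0" by (rule ordLeq_transitive[OF cK ordLeq_transitive[OF LY YH]])
    have "card_of H \<le>o card_of H0" unfolding H_def by (rule un_le[OF infH a b])
    thus ?thesis by blast
  qed
  thus ?thesis using funH by blast
qed
end

theorem lemma2p4:
  fixes L T C :: "'a set"
  assumes "infinite L"
    and "infinite T" and "regularCard (card_of T)"
    and "(card_of T, card_of L) \<in> ordLess"
    and "(finite C \<and> card C = 2) \<or> infinite C"
  shows "(card_of L, m_cov T L) \<in> ordLeq
       \<and> (m_cov T L, cf_sub T L) \<in> ordLeq \<and> (m_cov T L, cf_sup T L) \<in> ordLeq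
       \<and> ((card_of C, cardSuc (card_of T)) \<in> ordLeq \<longrightarrow> (m_cov T L, m_fun T L T C) \<in> ordLeq)
       \<and> (m_fun T T T C, m_fun L L T C) \<in> ordLeq
       \<and> ((m_fun L L T C, m_fun T T T C) \<in> ordLeq \<or> (m_fun L L T C, m_cov T L) \<in> ordLeq)"
proof -
  have TL': "(card_of T, card_of L) \<in> ordLeq" using assms(4) by (rule ordLess_imp_ordLeq)
  from mincard_ex[of "covP T L", OF covP_ex[of T L]] obtain YY where YY: "covP T L YY" "mincard (covP T L) = card_of YY" by blast
  have mc: "m_cov T L = card_of YY" unfolding m_cov_eq by (rule YY(2))
  from mincard_ex[of "subP T L", OF subP_ex[of T L]] obtain S where S: "subP T L S" "mincard (subP T L) = card_of S" by blast
  have ms: "cf_sub T L = card_of S" unfolding cf_sub_eq by (rule S(2))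
  from mincard_ex[of "supP T L", OF supP_ex[of T L]] obtain P where P: "supP T L P" "mincard (supP T L) = card_of P" by blast
  have mp: "cf_sup T L = card_of P" unfolding cf_sup_eq by (rule P(2))
  from mincard_ex[of "funP T T T C", OF funP_ex[OF assms(5), of T T T]] obtain H0 where H0: "funP T T T C H0" "mincard (funP T T T C) = card_of H0" by blast
  have m0: "m_fun T T T C = card_of H0" unfolding m_fun_eq by (rule H0(2))
  from mincard_ex[of "funP L L T C", OF funP_ex[OF assms(5), of L L T]] obtain H1 where H1: "funP L L T C H1" "mincard (funP L L T C) = card_of H1" by blast
  have m1: "m_fun L L T C = card_of H1" unfolding m_fun_eq by (rule H1(2))
  from mincard_ex[of "funP T L T C", OF funP_ex[OF assms(5), of T L T]] obtain H2 where H2: "funP T L T C H2" "mincard (funP T L T C) = card_of H2" by blast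
  have m2: "m_fun T L T C = card_of H2" unfolding m_fun_eq by (rule H2(2))
  have c1: "(card_of L, card_of YY) \<in> ordLeq" by (rule L_le_cov[OF assms(1,2,4) YY(1)])
  have c2: "(m_cov T L, cf_sub T L) \<in> ordLeq"
    unfolding ms m_cov_eq by (rule mincard_le[of "covP T L", OF subP_covP[OF S(1)]])
  have c3: "(m_cov T L, cf_sup T L) \<in> ordLeq"
    unfolding mp m_cov_eq by (rule mincard_le[of "covP T L", OF supP_covP[OF P(1)]])
  have c4: "(card_of C, cardSuc (card_of T)) \<in> ordLeq \<longrightarrow> (m_cov T L, m_fun T L T C) \<in> ordLeq"
  proof
    assume "(card_of C, cardSuc (card_of T)) \<in> ordLeq"
    from part2[OF assms(2,4) this H2(1)] show "(m_cov T L, m_fun T L T C) \<in> ordLeq" unfolding m2 .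
  qed
  have c5: "(m_fun T T T C, m_fun L L T C) \<in> ordLeq"
    unfolding m1 by (rule part3a[OF TL' H1(1) assms(5)])
  obtain H where H: "funP L L T C H" "(card_of H, card_of H0) \<in> ordLeq \<or> (card_of H, card_of YY) \<in> ordLeq"
    using part3b[OF assms(1,2,3,5) YY(1) H0(1) c1] by blast
  have mH: "(m_fun L L T C, card_of H) \<in> ordLeq" unfolding m_fun_eq by (rule mincard_le[of "funP L L T C", OF H(1)])
  have c6: "(m_fun L L T C, m_fun T T T C) \<in> ordLeq \<or> (m_fun L L T C, m_cov T L) \<in> ordLeq"
    unfolding m0 mc using H(2)
  proof
    assume a: "(card_of H, card_of H0) \<in> ordLeq"
    show "(m_fun L L T C, card_of H0) \<in> ordLeq \<or> (m_fun L L T C, card_of YY) \<in> ordLeq"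
      by (rule disjI1, rule ordLeq_transitive[OF mH a])
  next
    assume a: "(card_of H, card_of YY) \<in> ordLeq"
    show "(m_fun L L T C, card_of H0) \<in> ordLeq \<or> (m_fun L L T C, card_of YY) \<in> ordLeq"
      by (rule disjI2, rule ordLeq_transitive[OF mH a])
  qed
  show ?thesis using c1[folded mc] c2 c3 c4 c5 c6 by blast
qed

end
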